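(* Let $r(t)\in\mathbb{Z}[t]$. The following are equivalent: (i) $\operatorname{Cong}(r(t)) = 0$; (ii) $r(0)=0$, or there exist $u\in\mathbb{N}$ and $s(t)\in\mathbb{Z}[t]\setminus\mathbb{Z}$ such that $s(t^{u+1})$ divides $r(t)$ in $\mathbb{Z}[t]$.
   Context: $\mathbb{N}=\{1,2,\dots\}$. For $r(t)=\sum_i a_it^i$ and integers $u>j\ge0$, $r_{u,j}(t):=\sum_{i\equiv j\bmod u}a_it^i$. $\operatorname{Cong}(r(t))$ is the non-negative generator of the ideal $\mathbb{Z}\cap\bigcap_{1<u\le\deg(r(t))+1}\big(r_{u,0}(t)\mathbb{Z}[t]+\cdots+r_{u,u-1}(t)\mathbb{Z}[t]\big)$ of $\mathbb{Z}$. *)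

theory Defs
  imports "HOL-Computational_Algebra.Polynomial"
begin

definition rpart :: "nat \<Rightarrow> nat \<Rightarrow> int poly \<Rightarrow> int poly" where
  "rpart u j r = (\<Sum>i\<le>degree r. if i mod u = j then monom (coeff r i) i else 0)"

definition part_ideal :: "nat \<Rightarrow> int poly \<Rightarrow> int poly set" where
  "part_ideal u r = {(\<Sum>j<u. rpart u j r * q j) | q. True}"

text \<open>The ideal Z \<inter> \<Inter>_{1<u\<le>deg r + 1} (...) of Z (constants identified with integers).\<close>
definition cong_ideal :: "int poly \<Rightarrow> int set" where
  "cong_ideal r = {c. \<forall>u\<in>{2..degree r + 1}. [:c:] \<in> part_ideal u r}"

text \<open>Cong(r): the non-negative generator of cong_ideal r.  Convention: Cong(0) = 0
  (the zero polynomial has degree -\<infinity>).\<close>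
definition Cong :: "int poly \<Rightarrow> int" where
  "Cong r = (if r = 0 then 0 else (THE g. 0 \<le> g \<and> cong_ideal r = {c. g dvd c}))"

end

theory Submission
  imports Defs "HOL-Computational_Algebra.Polynomial_Factorial"
begin

definition rp :: "nat \<Rightarrow> nat \<Rightarrow> 'a::comm_ring_1 poly \<Rightarrow> 'a poly" where
  "rp u j r = (\<Sum>i\<le>degree r. if i mod u = j then monom (coeff r i) i else 0)"

lemma rpart_rp: "rpart u j r = rp u j r"
  unfolding rpart_def rp_def ..

lemma coeff_rp: "coeff (rp u j p) n = (if n mod u = j then coeff p n else 0)"
proof -
  have "coeff (rp u j p) n = (\<Sum>i\<le>degree p. if i mod u = j \<and> i = n then coeff p n else 0)"
    unfolding rp_def coeff_sum by (intro sum.cong) (auto simp: coeff_monom)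
  also have "\<dots> = (if n mod u = j then coeff p n else 0)"
  proof (cases "n \<le> degree p")
    case True
    have "(\<Sum>i\<le>degree p. if i mod u = j \<and> i = n then coeff p n else 0)
       = (\<Sum>i\<le>degree p. if i = n then (if n mod u = j then coeff p n else 0) else 0)"
      by (intro sum.cong) auto
    also have "\<dots> = (if n mod u = j then coeff p n else 0)" using True by (simp add: sum.delta')
    finally show ?thesis .
  qed (auto simp: coeff_eq_0 intro!: sum.neutral)
  finally show ?thesis .
qed

lemma rp_sum: "rp u k (sum f A) = (\<Sum>x\<in>A. rp u k (f x))"
  by (rule poly_eqI) (auto simp: coeff_rp coeff_sum intro!: sum.neutral)

lemma rp_add: "rp u k (a + b) = rp u k a + rp u k b"
  by (rule poly_eqI) (auto simp: coeff_rp)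

lemma rp_diff: "rp u k (a - b) = rp u k a - rp u k b"
  by (rule poly_eqI) (auto simp: coeff_rp)

lemma sum_rp: "u > 0 \<Longrightarrow> (\<Sum>j<u. rp u j p) = p"
proof (rule poly_eqI)
  fix n assume u: "u > 0"
  have "coeff (\<Sum>j<u. rp u j p) n = (\<Sum>j<u. if n mod u = j then coeff p n else 0)"
    by (simp add: coeff_sum coeff_rp)
  also have "\<dots> = coeff p n" using u by (simp add: sum.delta)
  finally show "coeff (\<Sum>j<u. rp u j p) n = coeff p n" .
qed

lemma map_rp: "map_poly (f::'a::comm_ring_1 \<Rightarrow> 'b::comm_ring_1) (rp u j p) = rp u j (map_poly f p)" if "f 0 = 0"
  by (rule poly_eqI) (simp add: coeff_rp coeff_map_poly that)

definition homog :: "nat \<Rightarrow> nat \<Rightarrow> 'a::comm_ring_1 poly \<Rightarrow> bool" where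
  "homog u j p \<longleftrightarrow> (\<forall>n. coeff p n \<noteq> 0 \<longrightarrow> n mod u = j)"

lemma homog_rp: "homog u j (rp u j p)"
  by (simp add: homog_def coeff_rp)

lemma homog_mult:
  assumes "homog u j a" "homog u l b"
  shows "homog u ((j + l) mod u) (a * b)"
  unfolding homog_def
proof (intro allI impI)
  fix n assume "coeff (a * b) n \<noteq> 0"
  then obtain i where i: "i \<le> n" "coeff a i * coeff b (n - i) \<noteq> 0"
    unfolding coeff_mult by (meson sum.neutral atMost_iff)
  hence "coeff a i \<noteq> 0" "coeff b (n - i) \<noteq> 0" by auto
  hence "i mod u = j" "(n - i) mod u = l" using assms unfolding homog_def by blast+
  moreover have "n = i + (n - i)" using i by simp
  ultimately show "n mod u = (j + l) mod u" by (metis mod_add_eq)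
qed

lemma rp_homog_same: "homog u k p \<Longrightarrow> rp u k p = p"
  by (rule poly_eqI) (auto simp: coeff_rp homog_def)

lemma rp_homog_other: "homog u j p \<Longrightarrow> j \<noteq> k \<Longrightarrow> rp u k p = 0"
  by (rule poly_eqI) (auto simp: coeff_rp homog_def)

lemma rp_mult_homog:
  assumes u: "u > 0" and a: "homog u j a"
  shows "rp u k (a * b) = a * (\<Sum>l<u. if (j + l) mod u = k then rp u l b else 0)"
proof -
  have "rp u k (a * b) = rp u k (\<Sum>l<u. a * rp u l b)"
    by (simp add: sum_rp[OF u] flip: sum_distrib_left)
  also have "\<dots> = (\<Sum>l<u. rp u k (a * rp u l b))" by (rule rp_sum)
  also have "\<dots> = (\<Sum>l<u. a * (if (j + l) mod u = k then rp u l b else 0))"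
  proof (intro sum.cong refl)
    fix l
    have h: "homog u ((j + l) mod u) (a * rp u l b)" by (rule homog_mult[OF a homog_rp])
    show "rp u k (a * rp u l b) = a * (if (j + l) mod u = k then rp u l b else 0)"
      using rp_homog_same[OF h] rp_homog_other[OF h] by auto
  qed
  also have "\<dots> = a * (\<Sum>l<u. if (j + l) mod u = k then rp u l b else 0)"
    by (simp add: sum_distrib_left)
  finally show ?thesis .
qed


lemma int_ideal_gen:
  fixes S :: "int set"
  assumes z: "0 \<in> S" and add: "\<And>x y. x \<in> S \<Longrightarrow> y \<in> S \<Longrightarrow> x + y \<in> S"
    and mul: "\<And>x k. x \<in> S \<Longrightarrow> k * x \<in> S"
  shows "\<exists>g\<ge>0. S = {c. g dvd c}"
proof (cases "S = {0}")
  case True thus ?thesis by (intro exI[of _ 0]) auto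
next
  case False
  then obtain x where x: "x \<in> S" "x \<noteq> 0" using z by auto
  have "\<exists>y. y \<in> S \<and> y > 0"
  proof (cases "x > 0")
    case True thus ?thesis using x by auto
  next
    case False thus ?thesis using x mul[OF x(1), of "-1"] by (intro exI[of _ "-x"]) auto
  qed
  then obtain y where y: "y \<in> S" "y > 0" by auto
  define n where "n = (LEAST n::nat. int n \<in> S \<and> n > 0)"
  have ex: "\<exists>n::nat. int n \<in> S \<and> n > 0" using y by (intro exI[of _ "nat y"]) auto
  have n: "int n \<in> S" "n > 0" using LeastI_ex[OF ex] unfolding n_def by auto
  have nmin: "\<And>m::nat. int m \<in> S \<Longrightarrow> m > 0 \<Longrightarrow> n \<le> m" unfolding n_def by (rule Least_le) auto
  show ?thesis
  proof (intro exI[of _ "int n"] conjI)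
    show "S = {c. int n dvd c}"
    proof safe
      fix c assume c: "c \<in> S"
      have "c mod int n = c + (- (c div int n)) * int n" by (simp add: minus_div_mult_eq_mod [symmetric])
      also have "\<dots> \<in> S" by (intro add c mul n)
      finally have m: "c mod int n \<in> S" .
      have lt: "c mod int n < int n" "0 \<le> c mod int n" using n by auto
      show "int n dvd c"
      proof (rule ccontr)
        assume "\<not> int n dvd c"
        hence "c mod int n \<noteq> 0" by auto
        have "int (nat (c mod int n)) \<in> S" using lt m by simp
        moreover have "nat (c mod int n) > 0" using lt \<open>c mod int n \<noteq> 0\<close> by simp
        ultimately have "n \<le> nat (c mod int n)" by (rule nmin)
        thus False using lt by linarith
      qed
    next
      fix c assume "int n dvd c"
      then obtain k where "c = int n * k" by auto
      thus "c \<in> S" using mul[OF n(1), of k] by (simp add: mult.commute)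
    qed
  qed simp
qed

lemma part_ideal_add: "a \<in> part_ideal u r \<Longrightarrow> b \<in> part_ideal u r \<Longrightarrow> a + b \<in> part_ideal u r"
  unfolding part_ideal_def
proof safe
  fix q q' show "\<exists>q''. (\<Sum>j<u. rpart u j r * q j) + (\<Sum>j<u. rpart u j r * q' j) = (\<Sum>j<u. rpart u j r * q'' j) \<and> True"
    by (intro exI[of _ "\<lambda>j. q j + q' j"]) (simp add: sum.distrib distrib_left)
qed

lemma part_ideal_mult: "a \<in> part_ideal u r \<Longrightarrow> a * z \<in> part_ideal u r"
  unfolding part_ideal_def
proof safe
  fix q show "\<exists>q''. (\<Sum>j<u. rpart u j r * q j) * z = (\<Sum>j<u. rpart u j r * q'' j) \<and> True"
    by (intro exI[of _ "\<lambda>j. q j * z"]) (simp add: sum_distrib_right mult.assoc)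
qed

lemma part_ideal_0: "0 \<in> part_ideal u r"
  unfolding part_ideal_def by (intro CollectI exI[of _ "\<lambda>_. 0"]) simp

lemma cong_ideal_gen: "\<exists>g\<ge>0. cong_ideal r = {c. g dvd c}"
proof (rule int_ideal_gen)
  show "0 \<in> cong_ideal r" by (simp add: cong_ideal_def part_ideal_0)
next
  fix x y assume "x \<in> cong_ideal r" "y \<in> cong_ideal r"
  thus "x + y \<in> cong_ideal r" unfolding cong_ideal_def
  proof safe
    fix u assume "\<forall>u\<in>{2..degree r + 1}. [:x:] \<in> part_ideal u r"
      "\<forall>u\<in>{2..degree r + 1}. [:y:] \<in> part_ideal u r" "u \<in> {2..degree r + 1}"
    hence "[:x:] + [:y:] \<in> part_ideal u r" by (intro part_ideal_add) auto
    thus "[:x + y:] \<in> part_ideal u r" by simp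
  qed
next
  fix x k assume "x \<in> cong_ideal r"
  moreover have "[:k * x:] = [:x:] * [:k:]" by simp
  ultimately show "k * x \<in> cong_ideal r" unfolding cong_ideal_def
  proof safe
    fix u assume "\<forall>u\<in>{2..degree r + 1}. [:x:] \<in> part_ideal u r" "u \<in> {2..degree r + 1}"
    hence "[:x:] * [:k:] \<in> part_ideal u r" by (intro part_ideal_mult) auto
    thus "[:k * x:] \<in> part_ideal u r" by (simp add: mult.commute)
  qed
qed

lemma Cong_zero_iff: "Cong r = 0 \<longleftrightarrow> r = 0 \<or> cong_ideal r = {0}"
proof (cases "r = 0")
  case False
  obtain g where g: "g \<ge> 0" "cong_ideal r = {c. g dvd c}" using cong_ideal_gen by blast
  have "(THE g. 0 \<le> g \<and> cong_ideal r = {c. g dvd c}) = g"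
  proof (rule the_equality)
    show "0 \<le> g \<and> cong_ideal r = {c. g dvd c}" using g by simp
  next
    fix g' assume "0 \<le> g' \<and> cong_ideal r = {c. g' dvd c}"
    hence "g' dvd g" "g dvd g'" "g' \<ge> 0" using g by auto
    thus "g' = g" using g(1) by (simp add: zdvd_antisym_nonneg)
  qed
  hence "Cong r = g" unfolding Cong_def using False by simp
  moreover have "{c. g dvd c} = {0} \<longleftrightarrow> g = 0"
  proof
    assume "{c. g dvd c} = {0}"
    hence "g dvd g \<longrightarrow> g = 0" by blast
    thus "g = 0" by simp
  qed auto
  ultimately show ?thesis using g False by auto
qed (simp add: Cong_def)


lemma coeff_pcompose_monom:
  fixes s :: "'a::comm_ring_1 poly"
  assumes U: "U > 0"
  shows "coeff (pcompose s (monom 1 U)) n = (if U dvd n then coeff s (n div U) else 0)"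
proof (induction s arbitrary: n)
  case 0 thus ?case by simp
next
  case (pCons a p)
  have e: "coeff (pcompose (pCons a p) (monom 1 U)) n =
     (if n = 0 then a else 0) + (if U \<le> n then coeff (pcompose p (monom 1 U)) (n - U) else 0)"
    by (simp add: pcompose_pCons coeff_monom_mult coeff_pCons split: nat.split)
  show ?case
  proof (cases "n = 0")
    case True thus ?thesis using e U by simp
  next
    case n: False
    show ?thesis
    proof (cases "U \<le> n")
      case True
      have d: "U dvd (n - U) \<longleftrightarrow> U dvd n" using True by (simp add: dvd_diff_nat dvd_minus_self)
      have q: "n div U = Suc ((n - U) div U)" using True U by (simp add: le_div_geq)
      show ?thesis using e n True pCons.IH[of "n - U"] d q by simp
    next
      case False
      hence "\<not> U dvd n" using n by (auto dest: dvd_imp_le)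
      thus ?thesis using e n False by simp
    qed
  qed
qed

lemma homog_pcompose_monom:
  fixes s :: "'a::comm_ring_1 poly"
  assumes U: "U > 0"
  shows "homog U 0 (pcompose s (monom 1 U))"
  unfolding homog_def coeff_pcompose_monom[OF U] by auto

lemma homog_0_pcompose:
  fixes p :: "'a::comm_ring_1 poly"
  assumes U: "U > 0" and h: "homog U 0 p"
  shows "\<exists>s. p = pcompose s (monom 1 U)"
proof -
  define s where "s = (\<Sum>i\<le>degree p. monom (coeff p (i * U)) i)"
  have cs: "coeff s i = (if i \<le> degree p then coeff p (i * U) else 0)" for i
  proof -
    have "coeff s i = (\<Sum>k\<le>degree p. if k = i then coeff p (i * U) else 0)"
      unfolding s_def coeff_sum by (intro sum.cong) (auto simp: coeff_monom)
    thus ?thesis by (simp add: sum.delta')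
  qed
  have "p = pcompose s (monom 1 U)"
  proof (rule poly_eqI)
    fix n
    show "coeff p n = coeff (pcompose s (monom 1 U)) n"
    proof (cases "U dvd n")
      case True
      then obtain k where k: "n = U * k" by auto
      have kd: "n div U = k" using k U by simp
      have kn: "k \<le> n" using U k by simp
      have e: "coeff (pcompose s (monom 1 U)) n = coeff s k"
        using True kd by (simp only: coeff_pcompose_monom[OF U] if_True)
      have nk: "k * U = n" using k by (simp add: mult.commute)
      show ?thesis
      proof (cases "k \<le> degree p")
        case True thus ?thesis using e cs[of k] nk by simp
      next
        case False
        hence "coeff p n = 0" using kn by (intro coeff_eq_0) simp
        thus ?thesis using e cs[of k] False by simp
      qed
    next
      case False
      hence "n mod U \<noteq> 0" by (simp add: dvd_eq_mod_eq_0)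
      hence "coeff p n = 0" using h by (auto simp: homog_def)
      thus ?thesis using False by (simp add: coeff_pcompose_monom[OF U])
    qed
  qed
  thus ?thesis by blast
qed

lemma easy1:
  fixes r :: "int poly"
  assumes r: "r \<noteq> 0" and r0: "poly r 0 = 0"
  shows "cong_ideal r = {0}"
proof -
  have "degree r \<noteq> 0"
  proof
    assume "degree r = 0"
    hence "coeff r (degree r) = 0" using r0 by (simp add: poly_0_coeff_0)
    thus False using r by simp
  qed
  hence in2: "2 \<in> {2..degree r + 1}" by auto
  have "c = 0" if c: "c \<in> cong_ideal r" for c
  proof -
    from c in2 have "[:c:] \<in> part_ideal 2 r" unfolding cong_ideal_def by blast
    then obtain q where q: "[:c:] = (\<Sum>j<2. rpart 2 j r * q j)" unfolding part_ideal_def by auto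
    have "coeff [:c:] 0 = (\<Sum>j<2. coeff (rpart 2 j r) 0 * coeff (q j) 0)"
      unfolding q coeff_sum coeff_mult_0 ..
    also have "\<dots> = 0"
      using r0 by (intro sum.neutral) (auto simp: rpart_rp coeff_rp poly_0_coeff_0)
    finally show ?thesis by simp
  qed
  moreover have "0 \<in> cong_ideal r" by (simp add: cong_ideal_def part_ideal_0)
  ultimately show ?thesis by auto
qed

lemma easy2:
  fixes r s :: "int poly"
  assumes r: "r \<noteq> 0" and s: "degree s \<noteq> 0" and U: "U \<ge> 2"
    and dv: "pcompose s (monom 1 U) dvd r"
  shows "cong_ideal r = {0}"
proof -
  define g where "g = pcompose s (monom 1 U)"
  have U0: "U > 0" using U by simp
  have dg: "degree g = degree s * U" unfolding g_def by (simp add: degree_pcompose degree_monom_eq)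
  have "degree g \<le> degree r" using dv r unfolding g_def[symmetric] by (rule dvd_imp_degree_le)
  moreover have "U \<le> degree s * U" using s by simp
  ultimately have "U \<le> degree r" using dg by linarith
  hence inU: "U \<in> {2..degree r + 1}" using U by auto
  obtain w where w: "r = g * w" using dv unfolding g_def[symmetric] by (rule dvdE)
  have hg: "homog U 0 g" unfolding g_def by (rule homog_pcompose_monom[OF U0])
  have rj: "rpart U j r = g * (\<Sum>l<U. if (0 + l) mod U = j then rp U l w else 0)" for j
    unfolding rpart_rp w by (rule rp_mult_homog[OF U0 hg])
  have "c = 0" if c: "c \<in> cong_ideal r" for c
  proof -
    from c inU have "[:c:] \<in> part_ideal U r" unfolding cong_ideal_def by blast
    then obtain q where q: "[:c:] = (\<Sum>j<U. rpart U j r * q j)" unfolding part_ideal_def by auto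
    also have "\<dots> = (\<Sum>j<U. g * ((\<Sum>l<U. if (0 + l) mod U = j then rp U l w else 0) * q j))"
      by (intro sum.cong refl) (simp only: rj mult.assoc)
    also have "\<dots> = g * (\<Sum>j<U. (\<Sum>l<U. if (0 + l) mod U = j then rp U l w else 0) * q j)"
      by (simp add: sum_distrib_left)
    finally have gd: "g dvd [:c:]" by (rule dvdI)
    have gp: "degree g > 0" using dg s U0 by simp
    show "c = 0"
    proof (rule ccontr)
      assume "c \<noteq> 0"
      hence "degree g \<le> degree [:c:]" using gd by (intro dvd_imp_degree_le) auto
      thus False using gp by simp
    qed
  qed
  moreover have "0 \<in> cong_ideal r" by (simp add: cong_ideal_def part_ideal_0)
  ultimately show ?thesis by auto
qed


lemma smult_sum2: "smult a (sum f A) = (\<Sum>x\<in>A. smult a (f x))"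
  by (induct A rule: infinite_finite_induct) (simp_all add: smult_add_right)

lemma map_poly_sum: "map_poly to_fract (sum f A) = (\<Sum>x\<in>A. map_poly to_fract (f x))"
  by (induct A rule: infinite_finite_induct) simp_all

lemma clear_one:
  fixes Q :: "int fract poly"
  shows "\<exists>d q. d \<noteq> 0 \<and> smult (to_fract d) Q = map_poly to_fract q"
proof -
  obtain c p' where cp: "Q = smult c (map_poly to_fract p')" by (rule content_decompose_fract)
  obtain a b where ab: "c = Fract a b" "b \<noteq> 0" by (cases c)
  have "to_fract b * c = to_fract a" using ab
    by (simp add: to_fract_def eq_fract)
  hence "smult (to_fract b) Q = map_poly to_fract (smult a p')"
    unfolding cp by simp
  thus ?thesis using ab by blast
qed

lemma clear_denoms:
  fixes Q :: "nat \<Rightarrow> int fract poly"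
  assumes "finite A"
  shows "\<exists>d q. d \<noteq> 0 \<and> (\<forall>j\<in>A. smult (to_fract d) (Q j) = map_poly to_fract (q j))"
  using assms
proof (induction A rule: finite_induct)
  case empty thus ?case by (intro exI[of _ 1]) auto
next
  case (insert x A)
  obtain d q where dq: "d \<noteq> 0" "\<forall>j\<in>A. smult (to_fract d) (Q j) = map_poly to_fract (q j)"
    using insert.IH by blast
  obtain e q' where eq: "e \<noteq> 0" "smult (to_fract e) (Q x) = map_poly to_fract q'"
    using clear_one by blast
  define qq where "qq = (\<lambda>j. if j = x then smult d q' else smult e (q j))"
  have "\<forall>j\<in>insert x A. smult (to_fract (d * e)) (Q j) = map_poly to_fract (qq j)"
  proof
    fix j assume j: "j \<in> insert x A"
    show "smult (to_fract (d * e)) (Q j) = map_poly to_fract (qq j)"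
    proof (cases "j = x")
      case True
      have "smult (to_fract (d * e)) (Q j) = smult (to_fract d) (smult (to_fract e) (Q x))"
        using True by simp
      thus ?thesis using True eq by (simp add: qq_def)
    next
      case False
      hence jA: "j \<in> A" using j by auto
      have "smult (to_fract (d * e)) (Q j) = smult (to_fract e) (smult (to_fract d) (Q j))"
        by (simp add: mult.commute)
      thus ?thesis using False dq jA by (simp add: qq_def)
    qed
  qed
  thus ?case using dq eq by (intro exI[of _ "d * e"] exI[of _ qq]) auto
qed

lemma core:
  fixes r :: "int poly"
  assumes r0: "poly r 0 \<noteq> 0" and u2: "u \<ge> 2"
    and nos: "\<not>(\<exists>s. degree s \<noteq> 0 \<and> pcompose s (monom 1 u) dvd r)"
  shows "\<exists>c. c \<noteq> 0 \<and> [:c:] \<in> part_ideal u r"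
proof -
  have u: "u > 0" using u2 by simp
  define R where "R = (\<lambda>j. map_poly to_fract (rpart u j r) :: int fract poly)"
  define I where "I = {(\<Sum>j<u. R j * Q j) | Q. True}"
  have I_intro: "(\<Sum>j<u. R j * Q j) \<in> I" for Q
    unfolding I_def by (rule CollectI, rule exI[of _ Q]) simp
  have Rh: "homog u j (R j)" for j
    unfolding R_def rpart_rp by (subst map_rp) (simp_all add: homog_rp)
  have I_add: "x + y \<in> I" if "x \<in> I" "y \<in> I" for x y
  proof -
    from that obtain Q Q' where "x = (\<Sum>j<u. R j * Q j)" "y = (\<Sum>j<u. R j * Q' j)"
      unfolding I_def by auto
    hence e: "x + y = (\<Sum>j<u. R j * (Q j + Q' j))" by (simp add: sum.distrib distrib_left)
    show ?thesis unfolding e by (rule I_intro)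
  qed
  have I_mult: "x * z \<in> I" if "x \<in> I" for x z
  proof -
    from that obtain Q where "x = (\<Sum>j<u. R j * Q j)" unfolding I_def by auto
    hence e: "x * z = (\<Sum>j<u. R j * (Q j * z))" by (simp add: sum_distrib_right mult.assoc)
    show ?thesis unfolding e by (rule I_intro)
  qed
  have I_diff: "x - y \<in> I" if "x \<in> I" "y \<in> I" for x y
    using I_add[OF that(1) I_mult[OF that(2), of "-1"]] by simp
  have I_R: "R j \<in> I" if "j < u" for j
  proof -
    have e: "R j = (\<Sum>l<u. R l * (if l = j then 1 else 0))"
      using that by (simp add: if_distrib sum.delta cong: if_cong)
    show ?thesis by (subst e, rule I_intro)
  qed
  have I_rp: "rp u k x \<in> I" if "x \<in> I" for x k
  proof -
    from that obtain Q where x: "x = (\<Sum>j<u. R j * Q j)" unfolding I_def by auto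
    have "rp u k x = (\<Sum>j<u. rp u k (R j * Q j))" unfolding x by (rule rp_sum)
    also have "\<dots> = (\<Sum>j<u. R j * (\<Sum>l<u. if (j + l) mod u = k then rp u l (Q j) else 0))"
      by (intro sum.cong refl rp_mult_homog[OF u Rh])
    finally show ?thesis by (simp only: I_intro)
  qed
  have cR0: "coeff (R 0) 0 \<noteq> 0" using r0
    by (simp add: R_def rpart_rp coeff_rp coeff_map_poly poly_0_coeff_0)
  hence R0: "R 0 \<noteq> 0" by auto
  define P where "P = (\<lambda>n. \<exists>x\<in>I. x \<noteq> 0 \<and> degree x = n)"
  have exP: "P (degree (R 0))" unfolding P_def using I_R[of 0] u R0 by blast
  obtain m where m: "m \<in> I" "m \<noteq> 0" "degree m = (LEAST n. P n)"
    using LeastI_ex[of P] exP unfolding P_def by blast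
  have mmin: "degree m \<le> degree x" if "x \<in> I" "x \<noteq> 0" for x
    unfolding m(3) by (rule Least_le) (use that in \<open>auto simp: P_def\<close>)
  have mdvd: "m dvd x" if x: "x \<in> I" for x
  proof (rule ccontr)
    assume nd: "\<not> m dvd x"
    have "x mod m = x - m * (x div m)" by (simp add: minus_div_mult_eq_mod[symmetric] mult.commute)
    also have "\<dots> \<in> I" by (intro I_diff x I_mult m(1))
    finally have "x mod m \<in> I" .
    moreover have "x mod m \<noteq> 0" using nd by (simp add: mod_eq_0_iff_dvd)
    moreover have "degree (x mod m) < degree m" using m(2) nd by (rule degree_mod_less_degree)
    ultimately show False using mmin by fastforce
  qed
  define k where "k = degree m mod u"
  have mk: "rp u k m = m"
  proof (rule ccontr)
    assume ne: "rp u k m \<noteq> m"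
    define d where "d = m - rp u k m"
    have dI: "d \<in> I" unfolding d_def by (intro I_diff m(1) I_rp)
    have d0: "d \<noteq> 0" using ne unfolding d_def by simp
    have cd: "coeff d n = 0" if "n \<ge> degree m" for n
    proof (cases "n = degree m")
      case True thus ?thesis by (simp add: d_def coeff_rp k_def)
    next
      case False
      hence "coeff m n = 0" using that by (intro coeff_eq_0) simp
      thus ?thesis by (simp add: d_def coeff_rp)
    qed
    have "degree d < degree m"
    proof (rule ccontr)
      assume "\<not> degree d < degree m"
      hence "coeff d (degree d) = 0" by (intro cd) simp
      thus False using d0 by simp
    qed
    thus False using mmin[OF dI d0] by simp
  qed
  hence hm: "homog u k m" using homog_rp[of u k m] by simp
  have "m dvd R 0" using mdvd I_R u by blast
  then obtain w where w: "R 0 = m * w" by auto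
  have "coeff m 0 \<noteq> 0" using cR0 unfolding w coeff_mult_0 by simp
  hence k0: "k = 0" using hm unfolding homog_def by auto
  show ?thesis
  proof (cases "degree m = 0")
    case True
    define c where "c = coeff m 0"
    have c: "m = [:c:]" "c \<noteq> 0" using m(2) degree_0_id[OF True] unfolding c_def by auto
    from m(1) obtain Q where Q: "m = (\<Sum>j<u. R j * Q j)" unfolding I_def by auto
    obtain d q where dq: "d \<noteq> 0" "\<forall>j\<in>{..<u}. smult (to_fract d) (Q j) = map_poly to_fract (q j)"
      using clear_denoms[of "{..<u}" Q] by blast
    define E where "E = (\<Sum>j<u. rpart u j r * q j)"
    have "smult (to_fract d) m = (\<Sum>j<u. R j * smult (to_fract d) (Q j))"
      unfolding Q by (simp add: smult_sum2 mult_smult_right)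
    also have "\<dots> = (\<Sum>j<u. R j * map_poly to_fract (q j))"
      using dq(2) by (intro sum.cong) auto
    also have "\<dots> = map_poly to_fract E"
      unfolding E_def R_def by (simp add: map_poly_sum)
    finally have FE: "map_poly to_fract E = [:to_fract d * c:]" using c by simp
    have "coeff E n = 0" if "n > 0" for n
    proof -
      have "coeff (map_poly to_fract E) n = 0" using that unfolding FE by (simp add: coeff_pCons split: nat.split)
      thus ?thesis by (simp add: coeff_map_poly)
    qed
    hence E: "E = [:coeff E 0:]"
      by (intro poly_eqI) (auto simp: coeff_pCons split: nat.split)
    have "to_fract (coeff E 0) = to_fract d * c"
      using arg_cong[OF FE, of "\<lambda>p. coeff p 0"] by (simp add: coeff_map_poly)
    hence "coeff E 0 \<noteq> 0" using dq(1) c(2) by auto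
    moreover have "E \<in> part_ideal u r" unfolding E_def part_ideal_def by blast
    ultimately have "[:coeff E 0:] \<in> part_ideal u r" using E by simp
    thus ?thesis using \<open>coeff E 0 \<noteq> 0\<close> by blast
  next
    case False
    have "m dvd (\<Sum>j<u. R j)" using mdvd I_R by (intro dvd_sum) auto
    also have "(\<Sum>j<u. R j) = map_poly to_fract r"
      unfolding R_def rpart_rp by (simp add: map_poly_sum sum_rp[OF u] flip: map_poly_sum)
    finally have mr: "m dvd map_poly to_fract r" .
    obtain c p' where cp: "m = smult c (map_poly to_fract p')" "content p' = 1"
      by (rule content_decompose_fract)
    have c0: "c \<noteq> 0" using m(2) cp by auto
    have "map_poly to_fract p' = smult (inverse c) m" using c0 cp by simp
    hence "map_poly to_fract p' dvd m" using c0 by (simp add: smult_dvd_iff)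
    hence "map_poly to_fract p' dvd map_poly to_fract r" using mr by (rule dvd_trans)
    hence pr: "p' dvd r" using cp(2) by (rule fract_poly_dvdD)
    have hp: "homog u 0 p'"
      using hm k0 c0 unfolding homog_def cp by (auto simp: coeff_map_poly)
    obtain s where s: "p' = pcompose s (monom 1 u)" using homog_0_pcompose[OF u hp] by blast
    have "degree p' = degree m" using c0 cp by (simp add: degree_map_poly degree_smult_eq)
    hence "degree s \<noteq> 0" using False s by (auto simp: degree_pcompose degree_monom_eq intro: gr0I)
    thus ?thesis using nos pr s by blast
  qed
qed


theorem proposition3p4:
  fixes r :: "int poly"
  shows "Cong r = 0 \<longleftrightarrow>
    (poly r 0 = 0 \<or>
     (\<exists>u::nat. u \<ge> 1 \<and> (\<exists>s::int poly. degree s \<noteq> 0 \<and>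
        pcompose s (monom 1 (u + 1)) dvd r)))"
proof
  assume C: "Cong r = 0"
  show "poly r 0 = 0 \<or> (\<exists>u::nat. u \<ge> 1 \<and> (\<exists>s::int poly. degree s \<noteq> 0 \<and>
        pcompose s (monom 1 (u + 1)) dvd r))"
  proof (rule ccontr)
    assume H: "\<not> ?thesis"
    hence r0: "poly r 0 \<noteq> 0" by blast
    hence rn: "r \<noteq> 0" by auto
    have ex: "\<exists>c. c \<noteq> 0 \<and> [:c:] \<in> part_ideal U r" if U: "U \<in> {2..degree r + 1}" for U
    proof (rule core[OF r0])
      show "2 \<le> U" using U by simp
      show "\<not> (\<exists>s. degree s \<noteq> 0 \<and> pcompose s (monom 1 U) dvd r)"
      proof
        assume "\<exists>s. degree s \<noteq> 0 \<and> pcompose s (monom 1 U) dvd r"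
        then obtain s where s: "degree s \<noteq> 0" "pcompose s (monom 1 ((U - 1) + 1)) dvd r"
          using U by auto
        have "U - 1 \<ge> 1" using U by auto
        thus False using H s by blast
      qed
    qed
    define cc where "cc = (\<lambda>U. SOME c. c \<noteq> 0 \<and> [:c:] \<in> part_ideal U r)"
    have cc: "cc U \<noteq> 0" "[:cc U:] \<in> part_ideal U r" if "U \<in> {2..degree r + 1}" for U
      using someI_ex[OF ex[OF that]] unfolding cc_def by auto
    define P where "P = (\<Prod>U\<in>{2..degree r + 1}. cc U)"
    have P0: "P \<noteq> 0" unfolding P_def using cc(1) by simp
    have "P \<in> cong_ideal r" unfolding cong_ideal_def
    proof (safe)
      fix U assume U: "U \<in> {2..degree r + 1}"
      have "P = cc U * (\<Prod>V\<in>{2..degree r + 1} - {U}. cc V)"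
        unfolding P_def using U by (subst prod.remove[of _ U]) auto
      hence "[:P:] = [:cc U:] * [:\<Prod>V\<in>{2..degree r + 1} - {U}. cc V:]" by simp
      thus "[:P:] \<in> part_ideal U r" by (simp only: part_ideal_mult[OF cc(2)[OF U]])
    qed
    moreover have "cong_ideal r = {0}" using C rn Cong_zero_iff by auto
    ultimately show False using P0 by auto
  qed
next
  assume H: "poly r 0 = 0 \<or> (\<exists>u::nat. u \<ge> 1 \<and> (\<exists>s::int poly. degree s \<noteq> 0 \<and>
        pcompose s (monom 1 (u + 1)) dvd r))"
  show "Cong r = 0"
  proof (cases "r = 0")
    case True thus ?thesis by (simp add: Cong_zero_iff)
  next
    case False
    from H show ?thesis
    proof
      assume "poly r 0 = 0"
      thus ?thesis using easy1[OF False] by (simp add: Cong_zero_iff)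
    next
      assume "\<exists>u::nat. u \<ge> 1 \<and> (\<exists>s::int poly. degree s \<noteq> 0 \<and> pcompose s (monom 1 (u + 1)) dvd r)"
      then obtain u s where "u \<ge> 1" "degree s \<noteq> 0" "pcompose s (monom 1 (u + 1)) dvd r" by blast
      hence "cong_ideal r = {0}" using easy2[OF False, of s "u + 1"] by simp
      thus ?thesis by (simp add: Cong_zero_iff)
    qed
  qed
qed

end
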